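(* Let $\mathcal G=(V,E,r)$ be a graph. (1) The monoid $\mathbf A(\mathcal G)$ is half-factorial if and only if $\mathcal G$ is acyclic. (2) The monoid $\mathbf A(\mathcal G)$ is factorial if and only if every connected component of $\mathcal G$ contains at most one edge.
   Context: A graph $\mathcal G=(V,E,r)$ consists of a finite vertex set $V$, a finite edge set $E$ disjoint from $V$, and a map $r$ assigning to each edge a two-element subset of $V$; multiple edges allowed, no loops. Acyclic means containing no cycle, where two edges with the same pair of endpoints form a cycle of length $2$. An agglomeration on $\mathcal G$ is a function $a\colon V\cup E\to\mathbb N_0$ with $a(v)\ge a(e)$ whenever $v$ is incident with $e$; $\mathbf A(\mathcal G)$ is the monoid of agglomerations under pointwise addition. A reduced atomic monoid is half-factorial if any two factorizations of an element into atoms have the same number of atoms, and factorial if every element factors uniquely into atoms up to order. *)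

theory Defs
  imports Main "HOL-Library.Multiset" "HOL-Library.Function_Algebras"
begin

text \<open>Multiple edges allowed, no loops.
  Disjointness of V and E is built in by working on the sum type 'v + 'e.\<close>
definition graph :: "'v set \<Rightarrow> 'e set \<Rightarrow> ('e \<Rightarrow> 'v set) \<Rightarrow> bool" where
  "graph V E r \<longleftrightarrow> finite V \<and> finite E \<and> (\<forall>e\<in>E. r e \<subseteq> V \<and> card (r e) = 2)"

text \<open>Cycle: distinct vertices v_0..v_{k-1} (k \<ge> 2) and distinct edges e_0..e_{k-1}
  with r e_i = {v_i, v_{i+1 mod k}}. For k = 2 this is a pair of parallel edges.\<close>
definition is_cycle :: "'v set \<Rightarrow> 'e set \<Rightarrow> ('e \<Rightarrow> 'v set) \<Rightarrow> 'v list \<Rightarrow> 'e list \<Rightarrow> bool" where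
  "is_cycle V E r vs es \<longleftrightarrow>
     length vs = length es \<and> length vs \<ge> 2 \<and> distinct vs \<and> distinct es \<and>
     set vs \<subseteq> V \<and> set es \<subseteq> E \<and>
     (\<forall>i<length vs. r (es ! i) = {vs ! i, vs ! ((i + 1) mod length vs)})"

definition graph_acyclic :: "'v set \<Rightarrow> 'e set \<Rightarrow> ('e \<Rightarrow> 'v set) \<Rightarrow> bool" where
  "graph_acyclic V E r \<longleftrightarrow> \<not> (\<exists>vs es. is_cycle V E r vs es)"

definition adj_rel :: "'v set \<Rightarrow> 'e set \<Rightarrow> ('e \<Rightarrow> 'v set) \<Rightarrow> ('v \<times> 'v) set" where
  "adj_rel V E r = {(u, w). \<exists>e\<in>E. r e = {u, w}}"

definition component :: "'v set \<Rightarrow> 'e set \<Rightarrow> ('e \<Rightarrow> 'v set) \<Rightarrow> 'v \<Rightarrow> 'v set" where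
  "component V E r v = {w \<in> V. (v, w) \<in> (adj_rel V E r)\<^sup>*}"

definition component_edges :: "'v set \<Rightarrow> 'e set \<Rightarrow> ('e \<Rightarrow> 'v set) \<Rightarrow> 'v \<Rightarrow> 'e set" where
  "component_edges V E r v = {e \<in> E. r e \<subseteq> component V E r v}"

definition agglomerations :: "'v set \<Rightarrow> 'e set \<Rightarrow> ('e \<Rightarrow> 'v set) \<Rightarrow> ('v + 'e \<Rightarrow> nat) set" where
  "agglomerations V E r =
     {a. (\<forall>v. v \<notin> V \<longrightarrow> a (Inl v) = 0) \<and> (\<forall>e. e \<notin> E \<longrightarrow> a (Inr e) = 0) \<and>
         (\<forall>e\<in>E. \<forall>v\<in>r e. a (Inr e) \<le> a (Inl v))}"

text \<open>Atoms and factorizations in a reduced commutative monoid M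
  (a submonoid of a commutative monoid whose only unit is 0).\<close>
definition atoms :: "'a::comm_monoid_add set \<Rightarrow> 'a set" where
  "atoms M = {a \<in> M. a \<noteq> 0 \<and> (\<forall>b\<in>M. \<forall>c\<in>M. a = b + c \<longrightarrow> b = 0 \<or> c = 0)}"

definition factorizations :: "'a::comm_monoid_add set \<Rightarrow> 'a \<Rightarrow> 'a multiset set" where
  "factorizations M a = {F. set_mset F \<subseteq> atoms M \<and> sum_mset F = a}"

definition half_factorial :: "'a::comm_monoid_add set \<Rightarrow> bool" where
  "half_factorial M \<longleftrightarrow>
     (\<forall>a\<in>M. \<forall>F\<in>factorizations M a. \<forall>G\<in>factorizations M a. size F = size G)"

definition factorial :: "'a::comm_monoid_add set \<Rightarrow> bool" where
  "factorial M \<longleftrightarrow> (\<forall>a\<in>M. \<exists>!F. F \<in> factorizations M a)"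

end

theory Submission
  imports Defs
begin

definition ind :: "'v set \<Rightarrow> 'e set \<Rightarrow> 'v + 'e \<Rightarrow> nat" where
  "ind W F = (\<lambda>x. case x of Inl v \<Rightarrow> if v \<in> W then 1 else 0 | Inr e \<Rightarrow> if e \<in> F then 1 else 0)"

lemma ind_simps[simp]: "ind W F (Inl v) = (if v \<in> W then 1 else 0)"
  "ind W F (Inr e) = (if e \<in> F then 1 else 0)"
  by (auto simp: ind_def)

lemma ind_add: "W1 \<inter> W2 = {} \<Longrightarrow> F1 \<inter> F2 = {} \<Longrightarrow> ind W1 F1 + ind W2 F2 = ind (W1 \<union> W2) (F1 \<union> F2)"
  by (rule ext, case_tac x) (auto simp: plus_fun_def)

lemma ind_eq_iff: "ind W F = ind W' F' \<longleftrightarrow> W = W' \<and> F = F'"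
proof
  assume h: "ind W F = ind W' F'"
  have "v \<in> W \<longleftrightarrow> v \<in> W'" for v using fun_cong[OF h, of "Inl v"]
    by (simp split: if_splits)
  moreover have "e \<in> F \<longleftrightarrow> e \<in> F'" for e using fun_cong[OF h, of "Inr e"]
    by (simp split: if_splits)
  ultimately show "W = W' \<and> F = F'" by blast
qed simp

lemma ind_eq_0: "ind W F = 0 \<longleftrightarrow> W = {} \<and> F = {}"
proof
  assume h: "ind W F = 0"
  have "v \<notin> W" for v using fun_cong[OF h, of "Inl v"]
    by (simp split: if_splits)
  moreover have "e \<notin> F" for e using fun_cong[OF h, of "Inr e"]
    by (simp split: if_splits)
  ultimately show "W = {} \<and> F = {}" by blast
qed (auto simp: ind_def fun_eq_iff split: sum.splits)

definition rel :: "('e \<Rightarrow> 'v set) \<Rightarrow> 'e set \<Rightarrow> ('v \<times> 'v) set" where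
  "rel r F = {(x,y). \<exists>e\<in>F. r e = {x,y}}"

lemma sum_mset_apply: "sum_mset M x = (\<Sum>q\<in>#M. q x)"
  by (induction M) auto

lemma sum_mset_count1:
  "(\<forall>q\<in>#M. q x = (if q = p then 1 else 0)) \<Longrightarrow> sum_mset M x = (count M p :: nat)"
  by (induction M) auto

lemma sum_mset_count2:
  "(\<forall>q\<in>#M. q x = (if q = p then 1 else 0) + (if q = p' then 1 else 0)) \<Longrightarrow> sum_mset M x = count M p + (count M p' :: nat)"
  by (induction M) auto

locale gr =
  fixes V :: "'v set" and E :: "'e set" and r :: "'e \<Rightarrow> 'v set"
  assumes G: "graph V E r"
begin

abbreviation "M \<equiv> agglomerations V E r"

definition cl :: "'v set \<Rightarrow> 'e set \<Rightarrow> bool" where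
  "cl W F \<longleftrightarrow> W \<subseteq> V \<and> F \<subseteq> E \<and> (\<forall>e\<in>F. r e \<subseteq> W)"

lemma finV: "finite V" and finE: "finite E" and rV: "e \<in> E \<Longrightarrow> r e \<subseteq> V"
  and rc: "e \<in> E \<Longrightarrow> card (r e) = 2"
  using G by (auto simp: graph_def)

lemma r_two: assumes "e \<in> E" obtains x y where "r e = {x,y}" "x \<noteq> y"
  using rc[OF assms] by (auto simp: card_2_iff)

lemma r_ne: "e \<in> E \<Longrightarrow> r e \<noteq> {}"
  using rc by fastforce

lemma ind_M: "cl W F \<Longrightarrow> ind W F \<in> M"
  by (auto simp: cl_def agglomerations_def)

lemma M_add: "a \<in> M \<Longrightarrow> b \<in> M \<Longrightarrow> a + b \<in> M"
  by (auto simp: agglomerations_def plus_fun_def add_mono)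

lemma M_0: "0 \<in> M"
  by (auto simp: agglomerations_def)

lemma not_atom:
  assumes "a = b + c" "b \<in> M" "c \<in> M" "b \<noteq> 0" "c \<noteq> 0" shows "a \<notin> atoms M"
  using assms by (auto simp: atoms_def)

lemma decomp_not_atom:
  assumes "W1 \<inter> W2 = {}" "F1 \<inter> F2 = {}" "cl W1 F1" "cl W2 F2" "W1 \<noteq> {}" "W2 \<noteq> {}"
  shows "ind (W1 \<union> W2) (F1 \<union> F2) \<notin> atoms M"
  apply (rule not_atom[of _ "ind W1 F1" "ind W2 F2"])
  using assms by (auto simp: ind_add ind_M ind_eq_0)

lemma atom_ind:
  assumes "a \<in> atoms M"
  shows "\<exists>W F. a = ind W F \<and> cl W F \<and> W \<noteq> {}"
proof -
  have aM: "a \<in> M" and a0: "a \<noteq> 0" using assms by (auto simp: atoms_def)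
  define b where "b = (\<lambda>x. min 1 (a x))"
  define c where "c = (\<lambda>x. a x - min 1 (a x))"
  have abc: "a = b + c" by (auto simp: b_def c_def plus_fun_def fun_eq_iff)
  have bM: "b \<in> M" using aM by (auto simp: b_def agglomerations_def) (meson le_trans min.cobounded2)
  have cM: "c \<in> M" using aM unfolding c_def agglomerations_def
    by (auto simp: min_def) (metis diff_le_mono le_SucE le_zero_eq not_less_eq_eq)+
  have "b \<noteq> 0" using a0 by (auto simp: b_def fun_eq_iff min_def split: if_splits) (metis Suc_leI)
  hence "c = 0" using assms abc bM cM by (auto simp: atoms_def)
  hence ab: "a = b" using abc by simp
  define W where "W = {v. a (Inl v) \<noteq> 0}"
  define F where "F = {e. a (Inr e) \<noteq> 0}"
  have aind: "a = ind W F"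
  proof
    fix x show "a x = ind W F x"
      using ab by (cases x) (auto simp: W_def F_def b_def fun_eq_iff min_def split: if_splits)
  qed
  have "cl W F" using aM unfolding cl_def W_def F_def agglomerations_def by force
  moreover have "W \<noteq> {}"
  proof
    assume "W = {}"
    with \<open>cl W F\<close> have "F = {}" using r_ne by (auto simp: cl_def)
    with \<open>W = {}\<close> aind a0 show False by (simp add: ind_eq_0)
  qed
  ultimately show ?thesis using aind by blast
qed

lemma conn_step:
  assumes "ind W F = b + c" "b \<in> M" "c \<in> M" "cl W F" "(x,y) \<in> rel r F"
  shows "b (Inl x) = 0 \<longleftrightarrow> b (Inl y) = 0"
proof -
  obtain e where e: "e \<in> F" "r e = {x,y}" using assms(5) by (auto simp: rel_def)
  have eE: "e \<in> E" and xy: "x \<in> W" "y \<in> W" using assms(4) e by (auto simp: cl_def)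
  have ev: "\<And>z. z \<in> r e \<Longrightarrow> b (Inr e) \<le> b (Inl z) \<and> c (Inr e) \<le> c (Inl z)"
    using assms(2,3) eE by (auto simp: agglomerations_def)
  have s: "\<And>z. b z + c z = ind W F z" using assms(1) by (simp add: plus_fun_def)
  from s[of "Inr e"] s[of "Inl x"] s[of "Inl y"] ev[of x] ev[of y] e xy
  show ?thesis by auto
qed

lemma conn_zero:
  assumes "ind W F = b + c" "b \<in> M" "c \<in> M" "cl W F" "\<forall>x\<in>W. (z,x) \<in> (rel r F)\<^sup>*"
    "z \<in> W" "b (Inl z) = 0"
  shows "b = 0"
proof -
  have "b (Inl x) = 0" if "x \<in> W" for x
  proof -
    have "(z,x) \<in> (rel r F)\<^sup>*" using assms(5) that by blast
    then show ?thesis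
    proof (induction rule: rtrancl_induct)
      case base then show ?case using assms(7) .
    next
      case (step y w) then show ?case using conn_step[OF assms(1-4)] by blast
    qed
  qed
  moreover have s: "\<And>z. b z + c z = ind W F z" using assms(1) by (simp add: plus_fun_def)
  ultimately have bv: "b (Inl x) = 0" for x
  proof (cases "x \<in> W")
    case False then show ?thesis using s[of "Inl x"] by simp
  qed (use \<open>\<And>x. x \<in> W \<Longrightarrow> b (Inl x) = 0\<close> in blast)
  have "b (Inr e) = 0" for e
  proof (cases "e \<in> F")
    case True
    then have "e \<in> E" using assms(4) by (auto simp: cl_def)
    then obtain v where "v \<in> r e" using r_ne by blast
    then show ?thesis using assms(2) \<open>e \<in> E\<close> bv[of v] by (force simp: agglomerations_def)
  next
    case False then show ?thesis using s[of "Inr e"] by simp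
  qed
  then show ?thesis using bv by (metis ext sum.exhaust zero_fun_def)
qed

lemma conn_atom:
  assumes "cl W F" "z \<in> W" "\<forall>x\<in>W. (z,x) \<in> (rel r F)\<^sup>*"
  shows "ind W F \<in> atoms M"
  unfolding atoms_def
proof (intro CollectI conjI ballI impI)
  show "ind W F \<in> M" using ind_M[OF assms(1)] .
  show "ind W F \<noteq> 0" using assms(2) by (auto simp: ind_eq_0)
  fix b c assume bc: "b \<in> M" "c \<in> M" "ind W F = b + c"
  have s: "b (Inl z) + c (Inl z) = 1" using bc(3) assms(2) by (metis ind_simps(1) plus_fun_apply)
  show "b = 0 \<or> c = 0"
  proof (cases "b (Inl z) = 0")
    case True then show ?thesis using conn_zero[OF bc(3) bc(1,2) assms(1,3,2)] by blast
  next
    case False then have "c (Inl z) = 0" using s by simp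
    then show ?thesis using conn_zero[of W F c b, OF _ bc(2,1) assms(1,3,2)] bc(3) by (simp add: add.commute)
  qed
qed

lemma card2_eq: "card A = 2 \<Longrightarrow> x \<in> A \<Longrightarrow> y \<in> A \<Longrightarrow> x \<noteq> y \<Longrightarrow> A = {x,y}"
  by (auto simp: card_2_iff)

definition decomp :: "'v set \<Rightarrow> 'e set \<Rightarrow> bool" where
  "decomp W F \<longleftrightarrow> (\<exists>W1 F1 W2 F2. W1 \<inter> W2 = {} \<and> F1 \<inter> F2 = {} \<and> W = W1 \<union> W2 \<and> F = F1 \<union> F2
     \<and> cl W1 F1 \<and> cl W2 F2 \<and> W1 \<noteq> {} \<and> W2 \<noteq> {})"

lemma cl_fin: "cl W F \<Longrightarrow> finite W \<and> finite F"
  using finV finE by (auto simp: cl_def intro: finite_subset)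

lemma big_decomp:
  assumes "cl W F" "card W \<ge> card F + 2"
  shows "decomp W F"
  using assms
proof (induction "card F" arbitrary: W F rule: less_induct)
  case less
  have finW: "finite W" and finF: "finite F" using cl_fin[OF less.prems(1)] by auto
  show ?case
  proof (cases "F = {}")
    case True
    then have "W \<noteq> {}" using less.prems by auto
    then obtain x where x: "x \<in> W" by blast
    have "W - {x} \<noteq> {}"
    proof
      assume "W - {x} = {}"
      then have "W \<subseteq> {x}" by blast
      then have "card W \<le> 1" using card_mono[of "{x}" W] by simp
      then show False using less.prems True by simp
    qed
    then show ?thesis unfolding decomp_def using x less.prems(1) True
      by (intro exI[of _ "{x}"] exI[of _ "{}"] exI[of _ "W - {x}"]) (auto simp: cl_def)
  next
    case False
    then obtain e where e: "e \<in> F" by blast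
    define F' where "F' = F - {e}"
    have "card F > 0" using e finF card_gt_0_iff by blast
    then have cF': "card F' < card F" "card F = Suc (card F')" using e finF by (simp_all add: F'_def)
    have clF': "cl W F'" using less.prems(1) by (auto simp: cl_def F'_def)
    have eE: "e \<in> E" and reW: "r e \<subseteq> W" using less.prems(1) e by (auto simp: cl_def)
    have "decomp W F'" using less.hyps[OF cF'(1) clF'] less.prems cF' by simp
    then obtain W1 F1 W2 F2 where D: "W1 \<inter> W2 = {}" "F1 \<inter> F2 = {}" "W = W1 \<union> W2" "F' = F1 \<union> F2"
      "cl W1 F1" "cl W2 F2" "W1 \<noteq> {}" "W2 \<noteq> {}" unfolding decomp_def by blast
    have cross: "decomp W F" if C: "A \<inter> B = {}" "FA \<inter> FB = {}" "W = A \<union> B" "F' = FA \<union> FB"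
      "cl A FA" "cl B FB" "A \<noteq> {}" "B \<noteq> {}" "card A \<ge> card FA + 2"
      "\<not> r e \<subseteq> A" "\<not> r e \<subseteq> B" for A B FA FB
    proof -
      have "FA \<subseteq> F'" using C(4) by blast
      moreover have "finite F'" using finF by (simp add: F'_def)
      ultimately have "card FA \<le> card F'" using card_mono by blast
      then have "card FA < card F" using cF' by linarith
      then have "decomp A FA" using less.hyps[of FA A] C(5,9) by blast
      then obtain T1 G1 T2 G2 where T: "T1 \<inter> T2 = {}" "G1 \<inter> G2 = {}" "A = T1 \<union> T2" "FA = G1 \<union> G2"
        "cl T1 G1" "cl T2 G2" "T1 \<noteq> {}" "T2 \<noteq> {}" unfolding decomp_def by blast
      obtain x where x: "x \<in> r e" "x \<notin> B" using C(11) by blast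
      obtain y where y: "y \<in> r e" "y \<notin> A" using C(10) by blast
      have xA: "x \<in> A" and yB: "y \<in> B" using x y reW C(3) by auto
      have "x \<noteq> y" using xA y by blast
      then have re: "r e = {x,y}" using card2_eq[OF rc[OF eE] x(1) y(1)] by blast
      have eF': "e \<notin> F'" by (simp add: F'_def)
      have FF: "F = insert e F'" using e by (auto simp: F'_def)
      have sw: "decomp W F" if S: "S1 \<inter> S2 = {}" "H1 \<inter> H2 = {}" "A = S1 \<union> S2" "FA = H1 \<union> H2"
        "cl S1 H1" "cl S2 H2" "S1 \<noteq> {}" "S2 \<noteq> {}" "x \<in> S1" for S1 S2 H1 H2
      proof -
        have c1: "S2 \<inter> (S1 \<union> B) = {}" using S(1,3) C(1) by auto
        have "e \<notin> H2" using eF' S(4) C(4) by auto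
        moreover have "H2 \<inter> H1 = {}" using S(2) by auto
        moreover have "H2 \<inter> FB = {}" using S(4) C(2) by auto
        ultimately have c2: "H2 \<inter> insert e (H1 \<union> FB) = {}" by auto
        have c3: "W = S2 \<union> (S1 \<union> B)" using S(3) C(3) by auto
        have c4: "F = H2 \<union> insert e (H1 \<union> FB)" using S(4) C(4) FF by auto
        have c5: "cl (S1 \<union> B) (insert e (H1 \<union> FB))" using S(5,9) C(6) eE re yB reW C(3)
          unfolding cl_def by auto
        show ?thesis unfolding decomp_def
          apply (rule exI[of _ S2], rule exI[of _ H2], rule exI[of _ "S1 \<union> B"], rule exI[of _ "insert e (H1 \<union> FB)"])
          using c1 c2 c3 c4 c5 S(6,8,9) by auto
      qed
      show ?thesis
      proof (cases "x \<in> T1")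
        case True
        then show ?thesis using sw[OF T] by blast
      next
        case False
        then have "x \<in> T2" using xA T(3) by blast
        then show ?thesis using sw[of T2 T1 G2 G1] T by (auto simp: Un_commute Int_commute)
      qed
    qed
    show ?thesis
    proof (cases "r e \<subseteq> W1")
      case True
      show ?thesis unfolding decomp_def
        apply (rule exI[of _ W1], rule exI[of _ "insert e F1"], rule exI[of _ W2], rule exI[of _ F2])
        apply (intro conjI)
        subgoal using D(1) .
        subgoal using D(2,4) by (auto simp: F'_def)
        subgoal using D(3) .
        subgoal using D(4) e by (auto simp: F'_def)
        subgoal using D(5) True eE unfolding cl_def by blast
        subgoal using D(6) .
        subgoal using D(7) .
        subgoal using D(8) .
        done
    next
      case n1: False
      show ?thesis
      proof (cases "r e \<subseteq> W2")
        case True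
        show ?thesis unfolding decomp_def
          apply (rule exI[of _ W1], rule exI[of _ F1], rule exI[of _ W2], rule exI[of _ "insert e F2"])
          apply (intro conjI)
          subgoal using D(1) .
          subgoal using D(2,4) by (auto simp: F'_def)
          subgoal using D(3) .
          subgoal using D(4) e by (auto simp: F'_def)
          subgoal using D(5) .
          subgoal using D(6) True eE unfolding cl_def by blast
          subgoal using D(7) .
          subgoal using D(8) .
          done
      next
        case n2: False
        have f1: "finite W1" "finite W2" "finite F1" "finite F2" using cl_fin D(5,6) by auto
        have "card W = card W1 + card W2" using D(1,3) f1 card_Un_disjoint by metis
        moreover have "card F' = card F1 + card F2" using D(2,4) f1 card_Un_disjoint by metis
        ultimately have "card W1 \<ge> card F1 + 2 \<or> card W2 \<ge> card F2 + 2" using less.prems(2) cF' by linarith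
        then show ?thesis
        proof
          assume "card W1 \<ge> card F1 + 2"
          then show ?thesis using cross[OF D(1-8)] n1 n2 by blast
        next
          assume "card W2 \<ge> card F2 + 2"
          then show ?thesis using cross[of W2 W1 F2 F1] D n1 n2 by (auto simp: Un_commute Int_commute)
        qed
      qed
    qed
  qed
qed

lemma atom_card_le:
  assumes "ind W F \<in> atoms M" "cl W F"
  shows "card W \<le> card F + 1"
proof (rule ccontr)
  assume "\<not> ?thesis"
  then have "decomp W F" using big_decomp[OF assms(2)] by simp
  then obtain W1 F1 W2 F2 where D: "W1 \<inter> W2 = {}" "F1 \<inter> F2 = {}" "W = W1 \<union> W2" "F = F1 \<union> F2"
      "cl W1 F1" "cl W2 F2" "W1 \<noteq> {}" "W2 \<noteq> {}" unfolding decomp_def by blast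
  show False using decomp_not_atom[OF D(1,2,5-8)] assms(1) D(3,4) by simp
qed

lemma simple_path:
  assumes "(u,w) \<in> (rel r G)\<^sup>*" "G \<subseteq> E" "u \<in> V"
  shows "\<exists>xs fs. length xs = Suc (length fs) \<and> xs!0 = u \<and> xs!(length fs) = w \<and> distinct xs
     \<and> set xs \<subseteq> V \<and> set fs \<subseteq> G \<and> (\<forall>i<length fs. r (fs!i) = {xs!i, xs!Suc i})"
  using assms(1)
proof (induction rule: rtrancl_induct)
  case base
  show ?case by (rule exI[of _ "[u]"], rule exI[of _ "[]"]) (simp add: assms(3))
next
  case (step y z)
  obtain xs fs where P: "length xs = Suc (length fs)" "xs!0 = u" "xs!(length fs) = y" "distinct xs"
     "set xs \<subseteq> V" "set fs \<subseteq> G" "\<forall>i<length fs. r (fs!i) = {xs!i, xs!Suc i}" using step.IH by blast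
  obtain f where f: "f \<in> G" "r f = {y,z}" using step.hyps(2) by (auto simp: rel_def)
  have zV: "z \<in> V" using f assms(2) rV by blast
  show ?case
  proof (cases "z \<in> set xs")
    case True
    then obtain i where i: "i < length xs" "xs!i = z" by (auto simp: in_set_conv_nth)
    have il: "i \<le> length fs" using i P(1) by simp
    show ?thesis
      apply (rule exI[of _ "take (Suc i) xs"], rule exI[of _ "take i fs"])
      apply (intro conjI)
      subgoal using i il by simp
      subgoal using P(2) by simp
      subgoal using i il by simp
      subgoal using P(4) by simp
      subgoal using P(5) by (meson in_set_takeD subset_code(1))
      subgoal using P(6) by (meson in_set_takeD subset_code(1))
      subgoal using P(7) il by simp
      done
  next
    case False
    show ?thesis
      apply (rule exI[of _ "xs @ [z]"], rule exI[of _ "fs @ [f]"])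
      using P False f zV by (auto simp: nth_append less_Suc_eq)
  qed
qed

lemma path_distinct_edges:
  assumes "distinct xs" "length xs = Suc (length fs)" "\<forall>i<length fs. r (fs!i) = {xs!i, xs!Suc i}"
  shows "distinct fs"
  unfolding distinct_conv_nth
proof (intro allI impI)
  fix i j assume ij: "i < length fs" "j < length fs" "i \<noteq> j"
  show "fs!i \<noteq> fs!j"
  proof
    assume "fs!i = fs!j"
    then have "{xs!i, xs!Suc i} = {xs!j, xs!Suc j}" using assms(3) ij by metis
    then have "(xs!i = xs!j \<and> xs!Suc i = xs!Suc j) \<or> (xs!i = xs!Suc j \<and> xs!Suc i = xs!j)"
      by (auto simp: doubleton_eq_iff)
    then show False using assms(1,2) ij by (auto simp: nth_eq_iff_index_eq)
  qed
qed

lemma no_cycle_path: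
  assumes "graph_acyclic V E r" "e \<in> E" "r e = {u,w}" "u \<noteq> w" "G \<subseteq> E - {e}" "(u,w) \<in> (rel r G)\<^sup>*"
  shows False
proof -
  have uV: "u \<in> V" using rV[OF assms(2)] assms(3) by blast
  obtain xs fs where P: "length xs = Suc (length fs)" "xs!0 = u" "xs!(length fs) = w" "distinct xs"
     "set xs \<subseteq> V" "set fs \<subseteq> G" "\<forall>i<length fs. r (fs!i) = {xs!i, xs!Suc i}"
    using simple_path[OF assms(6) _ uV] assms(5) by blast
  have dfs: "distinct fs" using path_distinct_edges P by blast
  have "length fs \<noteq> 0" using P(2,3) assms(4) by auto
  have "is_cycle V E r xs (fs @ [e])"
    unfolding is_cycle_def
  proof (intro conjI allI impI)
    show "length xs = length (fs @ [e])" using P by simp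
    show "2 \<le> length xs" using P \<open>length fs \<noteq> 0\<close> by (simp add: Suc_le_eq)
    show "distinct (fs @ [e])" using dfs P(6) assms(5) by auto
    show "set (fs @ [e]) \<subseteq> E" using P(6) assms(2,5) by auto
    fix i assume i: "i < length xs"
    show "r ((fs @ [e]) ! i) = {xs ! i, xs ! ((i + 1) mod length xs)}"
    proof (cases "i < length fs")
      case True then show ?thesis using P(1,7) by (simp add: nth_append)
    next
      case False then have "i = length fs" using i P(1) by simp
      then show ?thesis using P(1,2,3) assms(3) by (auto simp: nth_append)
    qed
  qed (use P in auto)
  then show False using assms(1) by (auto simp: graph_acyclic_def)
qed


lemma acyc_card:
  assumes "graph_acyclic V E r" "cl W F" "W \<noteq> {}"
  shows "card W \<ge> card F + 1"
  using assms(2,3)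
proof (induction "card F" arbitrary: W F rule: less_induct)
  case less
  have finW: "finite W" and finF: "finite F" using cl_fin[OF less.prems(1)] by auto
  show ?case
  proof (cases "F = {}")
    case True then show ?thesis using finW less.prems(2) by (simp add: Suc_leI card_gt_0_iff)
  next
    case False
    then obtain e where e: "e \<in> F" by blast
    have eE: "e \<in> E" and reW: "r e \<subseteq> W" using less.prems(1) e by (auto simp: cl_def)
    obtain u w where uw: "r e = {u,w}" "u \<noteq> w" using r_two[OF eE] by blast
    define F' where "F' = F - {e}"
    have cF': "card F = Suc (card F')" using e finF by (simp add: F'_def card_Suc_Diff1 del: card_Diff_insert card_Diff_singleton)
    define T where "T = {x \<in> W. (u,x) \<in> (rel r F')\<^sup>*}"
    define R where "R = W - T"
    define FT where "FT = {f \<in> F'. r f \<subseteq> T}"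
    define FR where "FR = {f \<in> F'. r f \<subseteq> R}"
    have F'E: "F' \<subseteq> E - {e}" using less.prems(1) by (auto simp: cl_def F'_def)
    have uT: "u \<in> T" using uw reW by (auto simp: T_def)
    have wR: "w \<in> R"
    proof -
      have "w \<notin> T" using no_cycle_path[OF assms(1) eE uw F'E] by (auto simp: T_def)
      then show ?thesis using uw reW by (auto simp: R_def)
    qed
    have split: "F' = FT \<union> FR"
    proof -
      have "f \<in> FT \<union> FR" if f: "f \<in> F'" for f
      proof -
        have fE: "f \<in> E" and rfW: "r f \<subseteq> W" using f less.prems(1) by (auto simp: cl_def F'_def)
        obtain a b where ab: "r f = {a,b}" using r_two[OF fE] by blast
        have "(a,b) \<in> rel r F'" "(b,a) \<in> rel r F'" using f ab by (auto simp: rel_def insert_commute)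
        then have "a \<in> T \<longleftrightarrow> b \<in> T" using ab rfW unfolding T_def
          by (auto intro: rtrancl_into_rtrancl)
        then show ?thesis using ab rfW f by (auto simp: FT_def FR_def R_def)
      qed
      then show ?thesis by (auto simp: FT_def FR_def)
    qed
    have disj: "FT \<inter> FR = {}"
    proof -
      have "f \<in> F' \<Longrightarrow> r f \<noteq> {}" for f using r_ne less.prems(1) by (auto simp: cl_def F'_def)
      then show ?thesis by (auto simp: FT_def FR_def R_def)
    qed
    have clT: "cl T FT" and clR: "cl R FR" using less.prems(1)
      by (auto simp: cl_def T_def R_def FT_def FR_def F'_def)
    have fT: "finite FT" "finite FR" using finF by (auto simp: FT_def FR_def F'_def)
    have cs: "card F' = card FT + card FR" using split disj fT card_Un_disjoint by metis
    have "card FT < card F" "card FR < card F" using cs cF' by auto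
    then have "card T \<ge> card FT + 1" "card R \<ge> card FR + 1"
      using less.hyps clT clR uT wR by blast+
    moreover have "card W = card T + card R"
    proof -
      have TW: "T \<subseteq> W" by (auto simp: T_def)
      then have "finite T" using finW finite_subset by blast
      then have "card R = card W - card T" using TW by (simp add: R_def card_Diff_subset)
      moreover have "card T \<le> card W" using TW finW card_mono by blast
      ultimately show ?thesis by simp
    qed
    ultimately show ?thesis using cs cF' by linarith
  qed
qed

definition phi :: "('v + 'e \<Rightarrow> nat) \<Rightarrow> int" where
  "phi a = (\<Sum>v\<in>V. int (a (Inl v))) - (\<Sum>e\<in>E. int (a (Inr e)))"

lemma phi_add: "phi (a + b) = phi a + phi b"
  by (simp add: phi_def sum.distrib)

lemma phi_0: "phi 0 = 0"
  by (simp add: phi_def)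

lemma phi_sum_mset: "phi (sum_mset F) = (\<Sum>q\<in>#F. phi q)"
  by (induction F) (simp_all only: sum_mset.empty sum_mset.add_mset image_mset_empty image_mset_add_mset phi_add phi_0)

lemma phi_ind: assumes "cl W F" shows "phi (ind W F) = int (card W) - int (card F)"
proof -
  have "(\<Sum>v\<in>V. int (ind W F (Inl v))) = (\<Sum>v\<in>V. if v \<in> W then 1 else 0)"
    by (rule sum.cong) auto
  also have "\<dots> = int (card (V \<inter> W))" using finV by (simp add: sum.If_cases)
  also have "V \<inter> W = W" using assms by (auto simp: cl_def)
  finally have 1: "(\<Sum>v\<in>V. int (ind W F (Inl v))) = int (card W)" .
  have "(\<Sum>e\<in>E. int (ind W F (Inr e))) = (\<Sum>e\<in>E. if e \<in> F then 1 else 0)"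
    by (rule sum.cong) auto
  also have "\<dots> = int (card (E \<inter> F))" using finE by (simp add: sum.If_cases)
  also have "E \<inter> F = F" using assms by (auto simp: cl_def)
  finally have 2: "(\<Sum>e\<in>E. int (ind W F (Inr e))) = int (card F)" .
  show ?thesis using 1 2 by (simp add: phi_def)
qed

lemma sum_mset_ones: "(\<forall>q\<in>#F. f q = (1::int)) \<Longrightarrow> (\<Sum>q\<in>#F. f q) = int (size F)"
  by (induction F) auto

lemma acyclic_hf:
  assumes "graph_acyclic V E r"
  shows "half_factorial M"
proof -
  have p1: "phi q = 1" if qa: "q \<in> atoms M" for q
  proof -
    obtain W F where q: "q = ind W F" "cl W F" "W \<noteq> {}" using atom_ind[OF qa] by blast
    have "card W \<le> card F + 1" using atom_card_le qa q by simp
    moreover have "card W \<ge> card F + 1" using acyc_card[OF assms q(2,3)] .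
    ultimately show ?thesis using phi_ind[OF q(2)] q(1) by simp
  qed
  have "phi a = int (size F)" if "F \<in> factorizations M a" for a F
  proof -
    have "phi a = (\<Sum>q\<in>#F. phi q)" using that phi_sum_mset by (auto simp: factorizations_def)
    also have "\<dots> = int (size F)" using that p1 by (intro sum_mset_ones) (auto simp: factorizations_def)
    finally show ?thesis .
  qed
  then show ?thesis unfolding half_factorial_def by (metis of_nat_eq_iff)
qed

lemma cyc_conn:
  assumes "is_cycle V E r vs es" "set (take (length vs - 1) es) \<subseteq> G" "i < length vs"
  shows "(vs!0, vs!i) \<in> (rel r G)\<^sup>*"
  using assms(3)
proof (induction i)
  case 0 then show ?case by simp
next
  case (Suc i)
  have L: "length es = length vs" and R: "r (es!i) = {vs!i, vs!((i+1) mod length vs)}"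
    using assms(1) Suc.prems by (auto simp: is_cycle_def)
  have "(i+1) mod length vs = Suc i" using Suc.prems by simp
  then have R': "r (es!i) = {vs!i, vs!Suc i}" using R by simp
  have "i < length (take (length vs - 1) es)" using Suc.prems L by simp
  then have "take (length vs - 1) es ! i \<in> set (take (length vs - 1) es)" by (rule nth_mem)
  then have "es!i \<in> set (take (length vs - 1) es)" using Suc.prems by simp
  then have "(vs!i, vs!Suc i) \<in> rel r G" using assms(2) R' by (auto simp: rel_def)
  with Suc show ?case by (meson Suc_lessD rtrancl.rtrancl_into_rtrancl)
qed

lemma cycle_bad:
  assumes "is_cycle V E r vs es"
  shows "\<exists>a\<in>M. \<exists>F\<in>factorizations M a. \<exists>G\<in>factorizations M a. size F \<noteq> size G"
proof -
  define k where "k = length vs"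
  define n where "n = k - 1"
  have k2: "k \<ge> 2" and L: "length es = k" and dv: "distinct vs" and de: "distinct es"
    and sV: "set vs \<subseteq> V" and sE: "set es \<subseteq> E"
    and R: "\<And>i. i < k \<Longrightarrow> r (es!i) = {vs!i, vs!((i+1) mod k)}"
    using assms by (auto simp: is_cycle_def k_def)
  have nk: "n < k" "Suc n = k" "0 < n" using k2 by (auto simp: n_def)
  have Rn: "r (es!n) = {vs!n, vs!0}" using R[OF nk(1)] nk(2) by simp
  have esplit: "es = take n es @ [es!n]"
  proof -
    have 1: "take (Suc n) es = take n es @ [es!n]" by (rule take_Suc_conv_app_nth) (use nk L in simp)
    have "take (Suc n) es = es" using nk(2) L by simp
    then show ?thesis using 1 by simp
  qed
  have ennot: "es!n \<notin> set (take n es)" using de esplit distinct_append[of "take n es" "[es!n]"] by simp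
  have v0n: "vs!0 \<noteq> vs!n" using nth_eq_iff_index_eq[OF dv, of 0 n] nk k_def by fastforce
  have l0: "0 < length vs" "n < length vs" using nk k_def by auto
  have v0: "vs!0 \<in> set vs" "vs!n \<in> set vs" using nth_mem[OF l0(1)] nth_mem[OF l0(2)] by blast+
  have enE: "es!n \<in> E" using sE nk L by (metis nth_mem subsetD)
  have clC: "cl (set vs) (set es)" unfolding cl_def
  proof (intro conjI ballI sV sE)
    fix f assume "f \<in> set es"
    then obtain i where "i < k" "f = es!i" using L by (metis in_set_conv_nth)
    moreover have "Suc i mod k < k" using \<open>i < k\<close> by simp
    ultimately show "r f \<subseteq> set vs" using R[of i] k_def nth_mem by auto
  qed
  have clP: "cl (set vs) (set (take n es))" using clC by (auto simp: cl_def dest: in_set_takeD)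
  have clQ: "cl {vs!n, vs!0} {es!n}" using Rn v0 sV enE by (auto simp: cl_def)
  have clS: "cl {v} {}" if "v \<in> set vs" for v using that sV by (auto simp: cl_def)
  have conn: "\<forall>x\<in>set vs. (vs!0, x) \<in> (rel r G)\<^sup>*" if "set (take n es) \<subseteq> G" for G
  proof
    fix x assume "x \<in> set vs"
    then obtain i where "i < length vs" "x = vs!i" by (metis in_set_conv_nth)
    then show "(vs!0, x) \<in> (rel r G)\<^sup>*" using cyc_conn[OF assms _ ] that by (simp add: n_def k_def)
  qed
  have aC: "ind (set vs) (set es) \<in> atoms M"
    using conn_atom[OF clC v0(1)] conn[of "set es"] by (auto dest: in_set_takeD)
  have aP: "ind (set vs) (set (take n es)) \<in> atoms M"
    using conn_atom[OF clP v0(1)] conn[of "set (take n es)"] by auto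
  have aQ: "ind {vs!n, vs!0} {es!n} \<in> atoms M"
  proof (rule conn_atom[OF clQ, of "vs!n"])
    have "(vs!n, vs!0) \<in> rel r {es!n}" using Rn by (auto simp: rel_def)
    then show "\<forall>x\<in>{vs!n, vs!0}. (vs!n, x) \<in> (rel r {es!n})\<^sup>*" by auto
  qed simp
  have aS: "ind {v} {} \<in> atoms M" if "v \<in> set vs" for v
    using conn_atom[OF clS[OF that], of v] by simp
  define a where "a = ind (set vs) (set (take n es)) + ind {vs!n, vs!0} {es!n}"
  have eq: "a = ind (set vs) (set es) + ind {vs!0} {} + ind {vs!n} {}"
  proof
    fix x show "a x = (ind (set vs) (set es) + ind {vs!0} {} + ind {vs!n} {}) x"
    proof (cases x)
      case (Inl v) then show ?thesis using v0 v0n by (auto simp: a_def)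
    next
      case (Inr f)
      have "set es = set (take n es) \<union> {es!n}" using esplit by (metis empty_set list.simps(15) set_append)
      then have "f \<in> set es \<longleftrightarrow> f \<in> set (take n es) \<or> f = es!n" by blast
      then show ?thesis using Inr ennot by (auto simp: a_def)
    qed
  qed
  have aM: "a \<in> M" unfolding a_def using M_add ind_M clP clQ by blast
  have F1: "{#ind (set vs) (set (take n es)), ind {vs!n, vs!0} {es!n}#} \<in> factorizations M a"
    using aP aQ by (simp add: factorizations_def a_def)
  have F2: "{#ind (set vs) (set es), ind {vs!0} {}, ind {vs!n} {}#} \<in> factorizations M a"
  proof -
    have "sum_mset {#ind (set vs) (set es), ind {vs!0} {}, ind {vs!n} {}#} = ind (set vs) (set es) + ind {vs!0} {} + ind {vs!n} {}"
      by (simp only: sum_mset.add_mset sum_mset.empty add_0_right add.assoc)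
    then show ?thesis using aC aS v0 eq unfolding factorizations_def by simp
  qed
  show ?thesis using aM F1 F2 by force
qed

definition wt :: "('v + 'e \<Rightarrow> nat) \<Rightarrow> nat" where
  "wt a = (\<Sum>v\<in>V. a (Inl v)) + (\<Sum>e\<in>E. a (Inr e))"

lemma wt_add: "wt (a + b) = wt a + wt b"
  by (simp add: wt_def sum.distrib)

lemma wt_pos: assumes "b \<in> M" "b \<noteq> 0" shows "wt b > 0"
proof -
  obtain x where x: "b x \<noteq> 0" using assms(2) by (auto simp: fun_eq_iff)
  show ?thesis
  proof (cases x)
    case (Inl v)
    then have "v \<in> V" using assms(1) x by (auto simp: agglomerations_def)
    then have "b (Inl v) \<le> (\<Sum>v\<in>V. b (Inl v))" using finV by (intro member_le_sum) auto
    then have "(\<Sum>v\<in>V. b (Inl v)) > 0" using x Inl by simp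
    then show ?thesis by (simp add: wt_def)
  next
    case (Inr e)
    then have "e \<in> E" using assms(1) x by (auto simp: agglomerations_def)
    then have "b (Inr e) \<le> (\<Sum>e\<in>E. b (Inr e))" using finE by (intro member_le_sum) auto
    then have "(\<Sum>e\<in>E. b (Inr e)) > 0" using x Inr by simp
    then show ?thesis by (simp add: wt_def)
  qed
qed

lemma atomic: "a \<in> M \<Longrightarrow> \<exists>F. F \<in> factorizations M a"
proof (induction "wt a" arbitrary: a rule: less_induct)
  case less
  show ?case
  proof (cases "a = 0")
    case True then show ?thesis by (intro exI[of _ "{#}"]) (simp add: factorizations_def)
  next
    case False
    show ?thesis
    proof (cases "a \<in> atoms M")
      case True then show ?thesis by (intro exI[of _ "{#a#}"]) (simp add: factorizations_def)
    next
      case na: False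
      then obtain b c where bc: "b \<in> M" "c \<in> M" "a = b + c" "b \<noteq> 0" "c \<noteq> 0"
        using less.prems False by (auto simp: atoms_def)
      have "wt b < wt a" "wt c < wt a" using wt_pos[OF bc(1,4)] wt_pos[OF bc(2,5)] bc(3) wt_add by auto
      then obtain Fb Fc where "Fb \<in> factorizations M b" "Fc \<in> factorizations M c"
        using less.hyps bc(1,2) by blast
      then have "Fb + Fc \<in> factorizations M a" using bc(3) by (auto simp: factorizations_def)
      then show ?thesis by blast
    qed
  qed
qed

definition uniq :: bool where
  "uniq \<longleftrightarrow> (\<forall>e\<in>E. \<forall>f\<in>E. \<forall>v. v \<in> r e \<and> v \<in> r f \<longrightarrow> e = f)"

lemma atoms_uniq:
  assumes u: uniq and q: "q \<in> atoms M"
  shows "(\<exists>v\<in>V. q = ind {v} {}) \<or> (\<exists>e\<in>E. q = ind (r e) {e})"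
proof -
  obtain W F where WF: "q = ind W F" "cl W F" "W \<noteq> {}" using atom_ind[OF q] by blast
  show ?thesis
  proof (cases "F = {}")
    case True
    obtain v where v: "v \<in> W" using WF(3) by blast
    have "W = {v}"
    proof (rule ccontr)
      assume "W \<noteq> {v}"
      then have "W - {v} \<noteq> {}" using v by blast
      then have "ind ({v} \<union> (W - {v})) ({} \<union> {}) \<notin> atoms M"
        using WF(2) v by (intro decomp_not_atom) (auto simp: cl_def)
      moreover have "{v} \<union> (W - {v}) = W" using v by blast
      ultimately show False using q WF(1) True by simp
    qed
    then show ?thesis using WF True v by (auto simp: cl_def)
  next
    case False
    then obtain e where e: "e \<in> F" by blast
    have eE: "e \<in> E" and reW: "r e \<subseteq> W" using WF(2) e by (auto simp: cl_def)
    have "W = r e \<and> F = {e}"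
    proof (rule ccontr)
      assume H: "\<not> (W = r e \<and> F = {e})"
      have cl2: "cl (W - r e) (F - {e})"
        unfolding cl_def
      proof (intro conjI ballI)
        show "W - r e \<subseteq> V" "F - {e} \<subseteq> E" using WF(2) by (auto simp: cl_def)
        fix f assume f: "f \<in> F - {e}"
        then have fE: "f \<in> E" "r f \<subseteq> W" using WF(2) by (auto simp: cl_def)
        have "r f \<inter> r e = {}" using u f fE eE unfolding uniq_def by blast
        then show "r f \<subseteq> W - r e" using fE by blast
      qed
      have ne: "W - r e \<noteq> {}"
      proof
        assume "W - r e = {}"
        then have "W = r e" using reW by blast
        with H have "F - {e} \<noteq> {}" using e by blast
        then obtain f where "f \<in> F - {e}" by blast
        then show False using cl2 r_ne[of f] \<open>W - r e = {}\<close> by (auto simp: cl_def)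
      qed
      have "ind (r e \<union> (W - r e)) ({e} \<union> (F - {e})) \<notin> atoms M"
        using cl2 ne eE reW rV[OF eE] r_ne[OF eE] by (intro decomp_not_atom) (auto simp: cl_def)
      moreover have "r e \<union> (W - r e) = W" "{e} \<union> (F - {e}) = F" using reW e by blast+
      ultimately show False using q WF(1) by simp
    qed
    then show ?thesis using WF(1) eE by blast
  qed
qed

lemma uniq_factorial:
  assumes u: uniq
  shows "factorial M"
  unfolding factorial_def
proof
  fix a assume aM: "a \<in> M"
  obtain F where F: "F \<in> factorizations M a" using atomic[OF aM] by blast
  have pv: "ind {v} {} \<noteq> ind (r e) {e}" for v e
    by (auto simp: ind_eq_iff)
  have key: "count F1 p = count F2 p" if F1: "F1 \<in> factorizations M a" and F2: "F2 \<in> factorizations M a" for F1 F2 p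
  proof -
    have ev_e: "sum_mset G (Inr e) = count G (ind (r e) {e})" if G: "G \<in> factorizations M a" "e \<in> E" for G e
    proof (rule sum_mset_count1, intro ballI)
      fix q assume "q \<in># G"
      then have "q \<in> atoms M" using G by (auto simp: factorizations_def)
      then consider (a) w where "w \<in> V" "q = ind {w} {}" | (b) f where "f \<in> E" "q = ind (r f) {f}"
        using atoms_uniq[OF u] by blast
      then show "q (Inr e) = (if q = ind (r e) {e} then 1 else 0)"
      proof cases
        case a then show ?thesis using pv by auto
      next
        case b then show ?thesis by (auto simp: ind_eq_iff)
      qed
    qed
    show ?thesis
    proof (cases "p \<in> atoms M")
      case False
      then have "p \<notin># F1" "p \<notin># F2" using F1 F2 by (auto simp: factorizations_def)
      then show ?thesis by (metis count_eq_zero_iff)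
    next
      case True
      then consider (v) v where "v \<in> V" "p = ind {v} {}" | (e) e where "e \<in> E" "p = ind (r e) {e}"
        using atoms_uniq[OF u] by blast
      then show ?thesis
      proof cases
        case e
        then show ?thesis using ev_e[OF F1 e(1)] ev_e[OF F2 e(1)] F1 F2 by (simp add: factorizations_def)
      next
        case v
        show ?thesis
        proof (cases "\<exists>e\<in>E. v \<in> r e")
          case True
          then obtain e where e: "e \<in> E" "v \<in> r e" by blast
          have ev_v: "sum_mset G (Inl v) = count G (ind {v} {}) + count G (ind (r e) {e})"
            if G: "G \<in> factorizations M a" for G
          proof (rule sum_mset_count2, intro ballI)
            fix q assume "q \<in># G"
            then have "q \<in> atoms M" using G by (auto simp: factorizations_def)
            then consider (a) w where "w \<in> V" "q = ind {w} {}" | (b) f where "f \<in> E" "q = ind (r f) {f}"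
              using atoms_uniq[OF u] by blast
            then show "q (Inl v) = (if q = ind {v} {} then 1 else 0) + (if q = ind (r e) {e} then 1 else 0)"
            proof cases
              case a then show ?thesis using pv by (auto simp: ind_eq_iff)
            next
              case b
              then have "v \<in> r f \<longleftrightarrow> f = e" using u e unfolding uniq_def by blast
              then show ?thesis using b pv[of v f] by (auto simp: ind_eq_iff)
            qed
          qed
          have "sum_mset F1 = sum_mset F2" using F1 F2 by (simp add: factorizations_def)
          then show ?thesis using ev_v[OF F1] ev_v[OF F2] ev_e[OF F1 e(1)] ev_e[OF F2 e(1)] v(2) by simp
        next
          case False
          have ev_v: "sum_mset G (Inl v) = count G (ind {v} {})" if G: "G \<in> factorizations M a" for G
          proof (rule sum_mset_count1, intro ballI)
            fix q assume "q \<in># G"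
            then have "q \<in> atoms M" using G by (auto simp: factorizations_def)
            then consider (a) w where "w \<in> V" "q = ind {w} {}" | (b) f where "f \<in> E" "q = ind (r f) {f}"
              using atoms_uniq[OF u] by blast
            then show "q (Inl v) = (if q = ind {v} {} then 1 else 0)"
            proof cases
              case a then show ?thesis by (auto simp: ind_eq_iff)
            next
              case b then show ?thesis using False pv[of v f] by auto
            qed
          qed
          have "sum_mset F1 = sum_mset F2" using F1 F2 by (simp add: factorizations_def)
          then show ?thesis using ev_v[OF F1] ev_v[OF F2] v(2) by simp
        qed
      qed
    qed
  qed
  show "\<exists>!F. F \<in> factorizations M a"
    using F key by (metis multiset_eqI)
qed

lemma two_fact_not_factorial:
  assumes "a \<in> M" "F \<in> factorizations M a" "G \<in> factorizations M a" "F \<noteq> G"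
  shows "\<not> factorial M"
  using assms unfolding factorial_def by blast

lemma factorial_uniq:
  assumes fa: "factorial M"
  shows uniq
  unfolding uniq_def
proof (intro ballI allI impI)
  fix e f v assume ef: "e \<in> E" "f \<in> E" "v \<in> r e \<and> v \<in> r f"
  show "e = f"
  proof (rule ccontr)
    assume ne: "e \<noteq> f"
    obtain x where x: "r e = {v,x}" "v \<noteq> x"
      using rc[OF ef(1)] ef(3) by (auto simp: card_2_iff doubleton_eq_iff)
    obtain y where y: "r f = {v,y}" "v \<noteq> y"
      using rc[OF ef(2)] ef(3) by (auto simp: card_2_iff doubleton_eq_iff)
    have vV: "v \<in> V" "x \<in> V" "y \<in> V" using rV[OF ef(1)] rV[OF ef(2)] x y by auto
    show False
    proof (cases "x = y")
      case True
      have "is_cycle V E r [v,x] [e,f]"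
        unfolding is_cycle_def
      proof (intro conjI allI impI)
        fix i assume "i < length [v,x]"
        then have "i = 0 \<or> i = 1" by auto
        then show "r ([e, f] ! i) = {[v, x] ! i, [v, x] ! ((i + 1) mod length [v, x])}"
          using x y True by (auto simp: insert_commute)
      qed (use x ne vV ef in auto)
      then obtain a F G where "a \<in> M" "F \<in> factorizations M a" "G \<in> factorizations M a" "size F \<noteq> size G"
        using cycle_bad by blast
      then show False using two_fact_not_factorial fa by blast
    next
      case False
      define S1 where "S1 = ind {v,x} {e}"
      define S2 where "S2 = ind {v,y} {f}"
      define U where "U = ind {v,x,y} {e,f}"
      define D where "D = ind {v} ({}::'e set)"
      have cl1: "cl {v,x} {e}" using vV ef x by (auto simp: cl_def)
      have cl2: "cl {v,y} {f}" using vV ef y by (auto simp: cl_def)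
      have clU: "cl {v,x,y} {e,f}" using vV ef x y by (auto simp: cl_def)
      have clD: "cl {v} {}" using vV by (auto simp: cl_def)
      have a1: "S1 \<in> atoms M" unfolding S1_def
      proof (rule conn_atom[OF cl1, of v])
        have "(v,x) \<in> rel r {e}" using x by (auto simp: rel_def)
        then show "\<forall>z\<in>{v,x}. (v,z) \<in> (rel r {e})\<^sup>*" by auto
      qed simp
      have a2: "S2 \<in> atoms M" unfolding S2_def
      proof (rule conn_atom[OF cl2, of v])
        have "(v,y) \<in> rel r {f}" using y by (auto simp: rel_def)
        then show "\<forall>z\<in>{v,y}. (v,z) \<in> (rel r {f})\<^sup>*" by auto
      qed simp
      have aU: "U \<in> atoms M" unfolding U_def
      proof (rule conn_atom[OF clU, of v])
        have "(v,x) \<in> rel r {e,f}" "(v,y) \<in> rel r {e,f}" using x y by (auto simp: rel_def)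
        then show "\<forall>z\<in>{v,x,y}. (v,z) \<in> (rel r {e,f})\<^sup>*" by auto
      qed simp
      have aD: "D \<in> atoms M" unfolding D_def using conn_atom[OF clD, of v] by simp
      have eq: "S1 + S2 = U + D"
      proof
        fix z show "(S1 + S2) z = (U + D) z"
          using x y False ne by (cases z) (auto simp: S1_def S2_def U_def D_def)
      qed
      have aM: "S1 + S2 \<in> M" using M_add ind_M cl1 cl2 unfolding S1_def S2_def by blast
      have F1: "{#S1, S2#} \<in> factorizations M (S1 + S2)" using a1 a2 by (simp add: factorizations_def)
      have F2: "{#U, D#} \<in> factorizations M (S1 + S2)" using aU aD eq by (simp add: factorizations_def)
      have "S1 \<noteq> U" "S1 \<noteq> D" using ne by (auto simp: S1_def U_def D_def ind_eq_iff)
      then have "\<not> S1 \<in># {#U, D#}" by simp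
      moreover have "S1 \<in># {#S1, S2#}" by simp
      ultimately have "{#S1, S2#} \<noteq> {#U, D#}" by metis
      then show False using two_fact_not_factorial[OF aM F1 F2] fa by blast
    qed
  qed
qed

lemma uniq_comp: "uniq \<longleftrightarrow> (\<forall>v\<in>V. card (component_edges V E r v) \<le> 1)"
proof
  assume u: uniq
  show "\<forall>v\<in>V. card (component_edges V E r v) \<le> 1"
  proof
    fix v assume vV: "v \<in> V"
    have reach: "x = y \<or> (\<exists>e\<in>E. x \<in> r e \<and> y \<in> r e)" if "(x,y) \<in> (adj_rel V E r)\<^sup>*" for x y
      using that
    proof (induction rule: rtrancl_induct)
      case base then show ?case by simp
    next
      case (step y z)
      obtain g where g: "g \<in> E" "r g = {y,z}" using step.hyps(2) by (auto simp: adj_rel_def)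
      from step.IH show ?case
      proof
        assume "x = y" then show ?thesis using g by auto
      next
        assume "\<exists>e\<in>E. x \<in> r e \<and> y \<in> r e"
        then obtain e where e: "e \<in> E" "x \<in> r e" "y \<in> r e" by blast
        then have "e = g" using u g unfolding uniq_def by blast
        then show ?thesis using e g by auto
      qed
    qed
    have vin: "v \<in> r e" if e: "e \<in> component_edges V E r v" for e
    proof (rule ccontr)
      assume nv: "v \<notin> r e"
      have eE: "e \<in> E" and sub: "r e \<subseteq> component V E r v" using e by (auto simp: component_edges_def)
      obtain p q where pq: "r e = {p,q}" "p \<noteq> q" using r_two[OF eE] by blast
      have "(v,p) \<in> (adj_rel V E r)\<^sup>*" "(v,q) \<in> (adj_rel V E r)\<^sup>*"
        using sub pq by (auto simp: component_def)
      then obtain gp gq where gp: "gp \<in> E" "v \<in> r gp" "p \<in> r gp" and gq: "gq \<in> E" "v \<in> r gq" "q \<in> r gq"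
        using reach nv pq by blast
      have "gp = gq" using u gp gq unfolding uniq_def by blast
      then have "{v,p,q} \<subseteq> r gp" using gp gq by auto
      moreover have "card {v,p,q} = 3" using nv pq by auto
      moreover have "finite (r gp)" using rV[OF gp(1)] finV finite_subset by blast
      ultimately have "3 \<le> card (r gp)" using card_mono by metis
      then show False using rc[OF gp(1)] by simp
    qed
    have "finite (component_edges V E r v)" using finE by (auto simp: component_edges_def)
    moreover have "\<forall>e\<in>component_edges V E r v. \<forall>f\<in>component_edges V E r v. e = f"
    proof (intro ballI)
      fix e f assume "e \<in> component_edges V E r v" "f \<in> component_edges V E r v"
      then show "e = f" using vin[of e] vin[of f] u unfolding uniq_def component_edges_def by blast
    qed
    ultimately show "card (component_edges V E r v) \<le> 1" by (simp add: card_le_Suc0_iff_eq)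
  qed
next
  assume c: "\<forall>v\<in>V. card (component_edges V E r v) \<le> 1"
  show uniq unfolding uniq_def
  proof (intro ballI allI impI)
    fix e f v assume ef: "e \<in> E" "f \<in> E" "v \<in> r e \<and> v \<in> r f"
    have vV: "v \<in> V" using ef rV by blast
    have inC: "g \<in> component_edges V E r v" if g: "g \<in> E" "v \<in> r g" for g
    proof -
      have "w \<in> component V E r v" if w: "w \<in> r g" for w
      proof (cases "w = v")
        case True then show ?thesis using vV by (auto simp: component_def)
      next
        case False
        then have "r g = {v,w}" using card2_eq[OF rc[OF g(1)] g(2) w] by simp
        then have "(v,w) \<in> adj_rel V E r" using g by (auto simp: adj_rel_def)
        then show ?thesis using rV[OF g(1)] w by (auto simp: component_def)
      qed
      then show ?thesis using g by (auto simp: component_edges_def)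
    qed
    have "finite (component_edges V E r v)" using finE by (auto simp: component_edges_def)
    moreover have "e \<in> component_edges V E r v" "f \<in> component_edges V E r v" using inC ef by auto
    ultimately show "e = f" using c vV by (auto simp: card_le_Suc0_iff_eq)
  qed
qed

end

theorem theorem4p20:
  fixes V :: "'v set" and E :: "'e set" and r :: "'e \<Rightarrow> 'v set"
  assumes "graph V E r"
  shows "(half_factorial (agglomerations V E r) \<longleftrightarrow> graph_acyclic V E r)
       \<and> (factorial (agglomerations V E r) \<longleftrightarrow>
            (\<forall>v\<in>V. card (component_edges V E r v) \<le> 1))"
proof -
  interpret gr V E r using assms by (unfold_locales)
  have 1: "half_factorial (agglomerations V E r) \<longleftrightarrow> graph_acyclic V E r"
  proof
    assume hf: "half_factorial (agglomerations V E r)"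
    show "graph_acyclic V E r"
      unfolding graph_acyclic_def
    proof
      assume "\<exists>vs es. is_cycle V E r vs es"
      then obtain vs es where "is_cycle V E r vs es" by blast
      then show False using cycle_bad hf unfolding half_factorial_def by blast
    qed
  next
    assume "graph_acyclic V E r"
    then show "half_factorial (agglomerations V E r)" by (rule acyclic_hf)
  qed
  have 2: "factorial (agglomerations V E r) \<longleftrightarrow> (\<forall>v\<in>V. card (component_edges V E r v) \<le> 1)"
    using factorial_uniq uniq_factorial uniq_comp by blast
  show ?thesis using 1 2 by blast
qed

end
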